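(* Let $\boldsymbol\alpha=(\alpha_i(\theta_b))_{1\le i\le k,1\le b\le B}$ be a fixed static allocation in the setting described in the context. Then for every $b\in\{1,\dots,B\}$ and every solution $i\neq i^b$, $$\liminf_{n\to\infty}-\frac1n\log \mathrm{P}\left(m^n_{i,b}=1\right)\;\ge\; G_i(\theta_b),$$ where $m^n_{i,b}=\mathbf 1\{i=i^b_n\}$.
   Context: There are $k\ge2$ solutions and $B$ parameter values $\theta_1,\dots,\theta_B$ with probabilities $p_1,\dots,p_B\ge 0$, $\sum_b p_b=1$. For each $i,b$, $y_i(\theta_b)\in\mathbb R$ is the (unknown) mean simulation output of solution $i$ at $\theta_b$. For each $b$ the conditional optimum $i^b=\arg\min_{1\le i\le k}y_i(\theta_b)$ is assumed unique. Simulation outputs $Y_{i1}(\theta_b),Y_{i2}(\theta_b),\dots$ at pair $(i,\theta_b)$ are i.i.d. $N(y_i(\theta_b),\lambda_i^2(\theta_b))$ with known $\lambda_i(\theta_b)>0$, independent across pairs. A static allocation is a vector $\boldsymbol\alpha$ with $\alpha_i(\theta_b)\ge0$ and $\sum_{i,b}\alpha_i(\theta_b)=1$; given $\boldsymbol\alpha$, after a total budget $n$ the pair $(i,\theta_b)$ has received $N_i^n(\theta_b)$ replications, where $N_i^n(\theta_b)/n\to\alpha_i(\theta_b)$ and $N_i^n(\theta_b)\to\infty$ as $n\to\infty$ (even if $\alpha_i(\theta_b)=0$). Let $\mu_{i,n}(\theta_b)$ be the sample mean of the $N_i^n(\theta_b)$ outputs at $(i,\theta_b)$ and $i^b_n=\arg\min_i\mu_{i,n}(\theta_b)$.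 For $i\ne i^b$ define $$G_i(\theta_b)=\frac{(y_i(\theta_b)-y_{i^b}(\theta_b))^2}{2\left(\lambda_i^2(\theta_b)/\alpha_i(\theta_b)+\lambda_{i^b}^2(\theta_b)/\alpha_{i^b}(\theta_b)\right)},$$ with $G_i(\theta_b)=0$ if $\alpha_i(\theta_b)=0$ or $\alpha_{i^b}(\theta_b)=0$. *)

theory Defs
  imports "HOL-Probability.Probability"
begin

text \<open>Solutions are indexed by i < k, parameter values theta_b by b < B.
  y i b = y_i(theta_b), lam i b = lambda_i(theta_b), alpha i b = alpha_i(theta_b),
  ib b = i^b (the unique conditional optimum).\<close>

definition G_rate :: "(nat \<Rightarrow> nat \<Rightarrow> real) \<Rightarrow> (nat \<Rightarrow> nat \<Rightarrow> real) \<Rightarrow> (nat \<Rightarrow> nat \<Rightarrow> real)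
    \<Rightarrow> (nat \<Rightarrow> nat) \<Rightarrow> nat \<Rightarrow> nat \<Rightarrow> real" where
  "G_rate y lam alpha ib i b =
     (if alpha i b = 0 \<or> alpha (ib b) b = 0 then 0
      else (y i b - y (ib b) b)^2 /
           (2 * ((lam i b)^2 / alpha i b + (lam (ib b) b)^2 / alpha (ib b) b)))"

definition sample_mean :: "(nat \<Rightarrow> nat \<Rightarrow> nat \<Rightarrow> 'a \<Rightarrow> real) \<Rightarrow> (nat \<Rightarrow> nat \<Rightarrow> nat \<Rightarrow> nat)
    \<Rightarrow> nat \<Rightarrow> nat \<Rightarrow> nat \<Rightarrow> 'a \<Rightarrow> real" where
  "sample_mean Y N n i b \<omega> = (\<Sum>j<N n i b. Y i b j \<omega>) / real (N n i b)"

end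

theory Submission
  imports Defs
begin

lemma normal_tail:
  assumes "prob_space M" and X: "distributed M lborel X (normal_density \<mu> \<sigma>)"
    and mu: "0 < \<mu>" and sg: "0 < \<sigma>"
  shows "measure M {\<omega>\<in>space M. X \<omega> \<le> 0} \<le> exp (- \<mu>\<^sup>2 / (2 * \<sigma>\<^sup>2))"
proof -
  interpret prob_space M by fact
  let ?e = "exp (- \<mu>\<^sup>2 / (2 * \<sigma>\<^sup>2))"
  have Xm: "X \<in> measurable M lborel" using X by (rule distributed_measurable)
  have "emeasure M {\<omega>\<in>space M. X \<omega> \<le> 0} = emeasure (distr M lborel X) {..0}"
    using Xm by (subst emeasure_distr) (auto intro!: arg_cong[where f="emeasure M"])
  also have "\<dots> = emeasure (density lborel (\<lambda>x. ennreal (normal_density \<mu> \<sigma> x))) {..0}"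
    using distributed_distr_eq_density[OF X] by simp
  also have "\<dots> = (\<integral>\<^sup>+x. ennreal (normal_density \<mu> \<sigma> x) * indicator {..0} x \<partial>lborel)"
    by (subst emeasure_density) auto
  also have "\<dots> \<le> (\<integral>\<^sup>+x. ennreal ?e * ennreal (normal_density 0 \<sigma> x) \<partial>lborel)"
  proof (rule nn_integral_mono)
    fix x :: real
    show "ennreal (normal_density \<mu> \<sigma> x) * indicator {..0} x \<le> ennreal ?e * ennreal (normal_density 0 \<sigma> x)"
    proof (cases "x \<le> 0")
      case True
      have "-(x - \<mu>)\<^sup>2 / (2 * \<sigma>\<^sup>2) \<le> - \<mu>\<^sup>2 / (2 * \<sigma>\<^sup>2) + -(x - 0)\<^sup>2 / (2 * \<sigma>\<^sup>2)"
        using True mu sg by (simp add: field_simps power2_eq_square) (simp add: mult_nonneg_nonpos)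
      then have "exp (-(x - \<mu>)\<^sup>2 / (2 * \<sigma>\<^sup>2)) \<le> ?e * exp (-(x - 0)\<^sup>2 / (2 * \<sigma>\<^sup>2))"
        by (simp add: exp_add[symmetric])
      then have "normal_density \<mu> \<sigma> x \<le> ?e * normal_density 0 \<sigma> x"
        unfolding normal_density_def by (simp add: divide_right_mono)
      then show ?thesis using True by (simp add: ennreal_mult'[symmetric] normal_density_nonneg)
    qed simp
  qed
  also have "\<dots> = ennreal ?e * (\<integral>\<^sup>+x. ennreal (normal_density 0 \<sigma> x) \<partial>lborel)"
    by (rule nn_integral_cmult) auto
  also have "(\<integral>\<^sup>+x. ennreal (normal_density 0 \<sigma> x) \<partial>lborel) = 1"
    by (subst nn_integral_eq_integral) (auto simp: normal_density_nonneg integrable_normal_density[OF sg] integral_normal_density[OF sg])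
  finally have "ennreal (measure M {\<omega>\<in>space M. X \<omega> \<le> 0}) \<le> ennreal ?e"
    by (simp add: emeasure_eq_measure)
  then show ?thesis by (simp add: ennreal_le_iff)
qed

lemma normal_pos:
  assumes "prob_space M" and X: "distributed M lborel X (normal_density \<mu> \<sigma>)"
    and sg: "0 < \<sigma>" and l: "l < u"
  shows "measure M {\<omega>\<in>space M. X \<omega> \<in> {l..u}} > 0"
proof -
  interpret prob_space M by fact
  have Xm: "X \<in> measurable M lborel" using X by (rule distributed_measurable)
  have "emeasure M {\<omega>\<in>space M. X \<omega> \<in> {l..u}} = emeasure (distr M lborel X) {l..u}"
    using Xm by (subst emeasure_distr) (auto intro!: arg_cong[where f="emeasure M"])
  also have "\<dots> = emeasure (density lborel (\<lambda>x. ennreal (normal_density \<mu> \<sigma> x))) {l..u}"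
    using distributed_distr_eq_density[OF X] by simp
  also have "\<dots> = (\<integral>\<^sup>+x. ennreal (normal_density \<mu> \<sigma> x) * indicator {l..u} x \<partial>lborel)"
    by (subst emeasure_density) auto
  finally have eq: "emeasure M {\<omega>\<in>space M. X \<omega> \<in> {l..u}} = (\<integral>\<^sup>+x. ennreal (normal_density \<mu> \<sigma> x) * indicator {l..u} x \<partial>lborel)" .
  have "(\<integral>\<^sup>+x. ennreal (normal_density \<mu> \<sigma> x) * indicator {l..u} x \<partial>lborel) \<noteq> 0"
  proof
    assume "(\<integral>\<^sup>+x. ennreal (normal_density \<mu> \<sigma> x) * indicator {l..u} x \<partial>lborel) = 0"
    then have "AE x in lborel. ennreal (normal_density \<mu> \<sigma> x) * indicator {l..u} x = 0"
      by (subst (asm) nn_integral_0_iff_AE) auto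
    then have "AE x in lborel. x \<notin> {l..u}"
      proof (rule AE_mp)
      show "AE x in lborel. ennreal (normal_density \<mu> \<sigma> x) * indicator {l..u} x = 0
         \<longrightarrow> x \<notin> {l..u}"
        using normal_density_pos[OF sg, of \<mu>] by (auto split: split_indicator simp: less_le)
    qed
    then have "emeasure lborel {x \<in> space lborel. \<not> x \<notin> {l..u}} = 0"
      by (subst (asm) AE_iff_measurable[OF _ refl]) auto
    moreover have "{x \<in> space lborel. \<not> x \<notin> {l..u}} = {l..u}" by auto
    ultimately show False using l by simp
  qed
  then show ?thesis using eq
    by (simp add: emeasure_eq_measure zero_less_measure_iff) (metis ennreal_0)
qed

theorem proposition1:
  fixes M :: "'a measure"
    and k B :: nat
    and y lam alpha :: "nat \<Rightarrow> nat \<Rightarrow> real"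
    and ib :: "nat \<Rightarrow> nat"
    and Y :: "nat \<Rightarrow> nat \<Rightarrow> nat \<Rightarrow> 'a \<Rightarrow> real"
    and N :: "nat \<Rightarrow> nat \<Rightarrow> nat \<Rightarrow> nat"
    and b i :: nat
  assumes "prob_space M"
    and "k \<ge> 2"
    and lam_pos: "\<And>i b. i < k \<Longrightarrow> b < B \<Longrightarrow> lam i b > 0"
    and ib_range: "\<And>b. b < B \<Longrightarrow> ib b < k"
    and ib_opt: "\<And>b j. b < B \<Longrightarrow> j < k \<Longrightarrow> j \<noteq> ib b \<Longrightarrow> y (ib b) b < y j b"
    and Y_normal: "\<And>i b j. i < k \<Longrightarrow> b < B \<Longrightarrow>
                     distributed M lborel (Y i b j) (normal_density (y i b) (lam i b))"
    and Y_indep: "prob_space.indep_vars M (\<lambda>_. borel) (\<lambda>(i, b, j). Y i b j)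
                    {(i, b, j). i < k \<and> b < B}"
    and alpha_nonneg: "\<And>i b. i < k \<Longrightarrow> b < B \<Longrightarrow> alpha i b \<ge> 0"
    and alpha_sum: "(\<Sum>i<k. \<Sum>b<B. alpha i b) = 1"
    and N_budget: "\<And>n. (\<Sum>i<k. \<Sum>b<B. N n i b) = n"
    and N_frac: "\<And>i b. i < k \<Longrightarrow> b < B \<Longrightarrow>
                   (\<lambda>n. real (N n i b) / real n) \<longlonglongrightarrow> alpha i b"
    and N_inf: "\<And>i b. i < k \<Longrightarrow> b < B \<Longrightarrow> filterlim (\<lambda>n. N n i b) at_top sequentially"
    and "b < B" and "i < k" and "i \<noteq> ib b"
  shows "liminf (\<lambda>n. ereal (- (1 / real n) *
            ln (measure M {\<omega> \<in> space M. \<forall>j<k. sample_mean Y N n i b \<omega> \<le> sample_mean Y N n j b \<omega>})))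
         \<ge> ereal (G_rate y lam alpha ib i b)"
proof -
  interpret P: prob_space M by fact
  note bB = \<open>b < B\<close> and ik = \<open>i < k\<close>
  define j0 where "j0 = ib b"
  have j0k: "j0 < k" using ib_range bB j0_def by simp
  have ij0: "i \<noteq> j0" using \<open>i \<noteq> ib b\<close> j0_def by simp
  define X where "X = (\<lambda>(i::nat, b::nat, j::nat). Y i b j)"
  have Ymeas[measurable]: "Y j b' l \<in> borel_measurable M" if "j < k" "b' < B" for j b' l
    using distributed_measurable[OF Y_normal[OF that, of l]] by simp
  have meanmeas[measurable]: "sample_mean Y N n j b \<in> borel_measurable M" if "j < k" for n j
    unfolding sample_mean_def using that bB by measurable
  define E where "E n = {\<omega> \<in> space M. \<forall>j<k. sample_mean Y N n i b \<omega> \<le> sample_mean Y N n j b \<omega>}" for n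
  have Esets: "E n \<in> sets M" for n
    unfolding E_def using ik by measurable
  have Epos: "measure M (E n) > 0" for n
  proof -
    define J where "J = (\<Union>j\<in>{..<k}. (\<lambda>l. (j, b, l)) ` {..<N n j b})"
    define A where "A = (\<lambda>(j::nat, b'::nat, l::nat). if j = i then {-1..0::real} else {0..1})"
    have finJ: "finite J" unfolding J_def by auto
    have JI: "J \<subseteq> {(i, b, j). i < k \<and> b < B}" using bB by (auto simp: J_def)
    have indJ: "P.indep_vars (\<lambda>_. borel) X J"
      using P.indep_vars_subset[OF Y_indep[folded X_def] JI] .
    define F where "F = {\<omega>\<in>space M. \<forall>x\<in>J. X x \<omega> \<in> A x}"
    have sub: "F \<subseteq> E n"
    proof
      fix \<omega> assume "\<omega> \<in> F"
      then have om: "\<omega> \<in> space M" and H0: "\<forall>x\<in>J. X x \<omega> \<in> A x" by (auto simp: F_def)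
      have H: "Y j b l \<omega> \<in> (if j = i then {-1..0} else {0..1})" if "j < k" "l < N n j b" for j l
      proof -
        have "(j, b, l) \<in> J" using that by (auto simp: J_def)
        then show ?thesis using bspec[OF H0, of "(j, b, l)"] by (simp add: X_def A_def)
      qed
      have m1: "sample_mean Y N n i b \<omega> \<le> 0"
        unfolding sample_mean_def using H[OF ik] by (intro divide_nonpos_nonneg sum_nonpos) auto
      have m2: "0 \<le> sample_mean Y N n j b \<omega>" if "j < k" "j \<noteq> i" for j
        unfolding sample_mean_def using H[OF that(1)] that by (intro divide_nonneg_nonneg sum_nonneg) auto
      show "\<omega> \<in> E n" unfolding E_def using om m1 m2 by force
    qed
    have "measure M F > 0"
    proof (cases "J = {}")
      case True
      then have "F = space M" by (simp add: F_def)
      then show ?thesis by (simp add: P.prob_space)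
    next
      case False
      have "F = (\<Inter>x\<in>J. X x -` A x \<inter> space M)" using False by (auto simp: F_def)
      then have "measure M F = (\<Prod>x\<in>J. measure M (X x -` A x \<inter> space M))"
        using P.indep_varsD_finite[OF indJ False finJ, of A] by (simp add: A_def split: prod.splits)
      also have "\<dots> > 0"
      proof (rule prod_pos)
        fix x assume "x \<in> J"
        then obtain j l where x: "x = (j, b, l)" "j < k" by (auto simp: J_def)
        have eq: "X x -` A x \<inter> space M = {\<omega>\<in>space M. Y j b l \<omega> \<in> (if j = i then {-1..0} else {0..1})}"
          by (auto simp: x X_def A_def)
        show "measure M (X x -` A x \<inter> space M) > 0"
          unfolding eq using normal_pos[OF \<open>prob_space M\<close> Y_normal[OF x(2) bB, of l] lam_pos[OF x(2) bB]]
          by (cases "j = i") auto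
      qed
      finally show ?thesis .
    qed
    also have "measure M F \<le> measure M (E n)" by (rule P.finite_measure_mono[OF sub Esets])
    finally show ?thesis .
  qed
  have Eup: "measure M (E n) \<le> exp (- (y i b - y j0 b)\<^sup>2 / (2 * (lam i b ^ 2 / real (N n i b) + lam j0 b ^ 2 / real (N n j0 b))))"
    if Np: "N n i b > 0" "N n j0 b > 0" for n
  proof -
    define I1 where "I1 = (\<lambda>l. (i, b, l)) ` {..<N n i b}"
    define I2 where "I2 = (\<lambda>l. (j0, b, l)) ` {..<N n j0 b}"
    define I where "I = I1 \<union> I2"
    have disj: "I1 \<inter> I2 = {}" using ij0 by (auto simp: I1_def I2_def)
    have II: "I \<subseteq> {(i, b, j). i < k \<and> b < B}" using bB ik j0k by (auto simp: I_def I1_def I2_def)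
    have finI: "finite I" by (simp add: I_def I1_def I2_def)
    have Ine: "I \<noteq> {}" using Np by (auto simp: I_def I1_def)
    have sumI: "(\<Sum>x\<in>I. f x) = (\<Sum>l<N n i b. f (i, b, l)) + (\<Sum>l<N n j0 b. f (j0, b, l))"
      for f :: "nat \<times> nat \<times> nat \<Rightarrow> real"
      unfolding I_def using disj
      by (simp add: sum.union_disjoint I1_def I2_def sum.reindex inj_on_def)
    define c where "c = (\<lambda>(j::nat, b'::nat, l::nat). if j = i then 1 / real (N n i b) else - 1 / real (N n j0 b))"
    define Z where "Z = (\<lambda>x \<omega>. c x * X x \<omega>)"
    define mu where "mu = (\<lambda>x. c x * (case x of (j, b', l) \<Rightarrow> y j b'))"
    define sg where "sg = (\<lambda>x. \<bar>c x\<bar> * (case x of (j, b', l) \<Rightarrow> lam j b'))"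
    have indZ: "P.indep_vars (\<lambda>_. borel) Z I"
      using P.indep_vars_compose2[OF P.indep_vars_subset[OF Y_indep[folded X_def] II], of "\<lambda>x t. c x * t" "\<lambda>_. borel"]
      unfolding Z_def by simp
    have xI: "\<exists>j l. x = (j, b, l) \<and> j < k \<and> c x \<noteq> 0" if "x \<in> I" for x
      using that Np ik j0k by (auto simp: I_def I1_def I2_def c_def)
    have Zd: "distributed M lborel (Z x) (normal_density (mu x) (sg x))" if xin: "x \<in> I" for x
    proof -
      obtain j l where x: "x = (j, b, l)" "j < k" "c x \<noteq> 0" using xI[OF xin] by blast
      show ?thesis
        using P.normal_density_affine[OF Y_normal[OF x(2) bB, of l] lam_pos[OF x(2) bB] x(3), of 0]
        by (simp add: Z_def mu_def sg_def x X_def)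
    qed
    have sgpos: "0 < sg x" if xin: "x \<in> I" for x
    proof -
      obtain j l where x: "x = (j, b, l)" "j < k" "c x \<noteq> 0" using xI[OF xin] by blast
      show ?thesis using lam_pos[OF x(2) bB] x by (simp add: sg_def)
    qed
    have D: "distributed M lborel (\<lambda>\<omega>. \<Sum>x\<in>I. Z x \<omega>) (normal_density (\<Sum>x\<in>I. mu x) (sqrt (\<Sum>x\<in>I. (sg x)\<^sup>2)))"
      by (rule P.sum_indep_normal[OF finI Ine indZ sgpos Zd])
    have e1: "(\<lambda>\<omega>. \<Sum>x\<in>I. Z x \<omega>) = (\<lambda>\<omega>. sample_mean Y N n i b \<omega> - sample_mean Y N n j0 b \<omega>)"
      using ij0 by (simp add: fun_eq_iff sumI sample_mean_def Z_def c_def X_def sum_divide_distrib sum_distrib_left sum_negf)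
    have e2: "(\<Sum>x\<in>I. mu x) = y i b - y j0 b"
      using ij0 Np by (simp add: sumI mu_def c_def)
    have e3: "(\<Sum>x\<in>I. (sg x)\<^sup>2) = lam i b ^ 2 / real (N n i b) + lam j0 b ^ 2 / real (N n j0 b)"
      using ij0 Np by (simp add: sumI sg_def c_def power2_eq_square)
    have vpos: "0 < lam i b ^ 2 / real (N n i b) + lam j0 b ^ 2 / real (N n j0 b)"
      using Np lam_pos[OF ik bB] lam_pos[OF j0k bB] by (simp add: add_pos_pos)
    have dpos: "0 < y i b - y j0 b" using ib_opt[OF bB ik \<open>i \<noteq> ib b\<close>] j0_def by simp
    have tail: "measure M {\<omega>\<in>space M. sample_mean Y N n i b \<omega> - sample_mean Y N n j0 b \<omega> \<le> 0}
       \<le> exp (- (y i b - y j0 b)\<^sup>2 / (2 * (sqrt (lam i b ^ 2 / real (N n i b) + lam j0 b ^ 2 / real (N n j0 b)))\<^sup>2))"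
      using normal_tail[OF \<open>prob_space M\<close> D[unfolded e1 e2 e3] dpos] vpos by simp
    have "measure M (E n) \<le> measure M {\<omega>\<in>space M. sample_mean Y N n i b \<omega> - sample_mean Y N n j0 b \<omega> \<le> 0}"
    proof (rule P.finite_measure_mono)
      show "E n \<subseteq> {\<omega>\<in>space M. sample_mean Y N n i b \<omega> - sample_mean Y N n j0 b \<omega> \<le> 0}"
        using j0k by (auto simp: E_def)
      show "{\<omega>\<in>space M. sample_mean Y N n i b \<omega> - sample_mean Y N n j0 b \<omega> \<le> 0} \<in> sets M"
        using ik j0k by measurable
    qed
    also note tail
    finally show ?thesis using vpos by simp
  qed
  have Ele1: "measure M (E n) \<le> 1" for n by (rule P.prob_le_1)
  have fnn: "0 \<le> - (1 / real n) * ln (measure M (E n))" for n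
  proof -
    have "ln (measure M (E n)) \<le> 0" using Epos[of n] Ele1[of n] by simp
    then show ?thesis by (simp add: divide_nonpos_nonneg)
  qed
  show ?thesis
  proof (cases "alpha i b = 0 \<or> alpha (ib b) b = 0")
    case True
    then have "G_rate y lam alpha ib i b = 0" unfolding G_rate_def by auto
    moreover have "liminf (\<lambda>n. ereal 0) \<le> liminf (\<lambda>n. ereal (- (1 / real n) * ln (measure M (E n))))"
      by (rule Liminf_mono) (use fnn in auto)
    ultimately show ?thesis by (simp add: E_def Liminf_const)
  next
    case False
    have ai: "alpha i b > 0" using False alpha_nonneg[OF ik bB] by simp
    have aj: "alpha j0 b > 0" using False alpha_nonneg[OF j0k bB] j0_def by simp
    define d where "d = y i b - y j0 b"
    define li where "li = lam i b"
    define lj where "lj = lam j0 b"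
    have lip: "li > 0" using lam_pos[OF ik bB] li_def by simp
    have ljp: "lj > 0" using lam_pos[OF j0k bB] lj_def by simp
    define g where "g n = d\<^sup>2 / (2 * (li\<^sup>2 * (real n / real (N n i b)) + lj\<^sup>2 * (real n / real (N n j0 b))))" for n
    have Geq: "G_rate y lam alpha ib i b = d\<^sup>2 / (2 * (li\<^sup>2 * inverse (alpha i b) + lj\<^sup>2 * inverse (alpha j0 b)))"
      unfolding G_rate_def d_def li_def lj_def j0_def using False by (simp add: divide_inverse)
    have inv1: "(\<lambda>n. real n / real (N n i b)) \<longlonglongrightarrow> inverse (alpha i b)"
      using tendsto_inverse[OF N_frac[OF ik bB]] ai by (simp add: inverse_divide)
    have inv2: "(\<lambda>n. real n / real (N n j0 b)) \<longlonglongrightarrow> inverse (alpha j0 b)"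
      using tendsto_inverse[OF N_frac[OF j0k bB]] aj by (simp add: inverse_divide)
    have den: "2 * (li\<^sup>2 * inverse (alpha i b) + lj\<^sup>2 * inverse (alpha j0 b)) \<noteq> 0"
    proof -
      have "0 < li\<^sup>2 * inverse (alpha i b)" "0 < lj\<^sup>2 * inverse (alpha j0 b)"
        using ai aj lip ljp by auto
      from add_pos_pos[OF this] show ?thesis by simp
    qed
    have glim: "g \<longlonglongrightarrow> G_rate y lam alpha ib i b"
      unfolding Geq g_def by (intro tendsto_intros inv1 inv2 den)
    have ev1: "eventually (\<lambda>n. N n i b \<ge> 1) sequentially"
      using N_inf[OF ik bB] by (simp add: filterlim_at_top)
    have ev2: "eventually (\<lambda>n. N n j0 b \<ge> 1) sequentially"
      using N_inf[OF j0k bB] by (simp add: filterlim_at_top)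
    have "eventually (\<lambda>n. ereal (g n) \<le> ereal (- (1 / real n) * ln (measure M (E n)))) sequentially"
      using ev1 ev2 eventually_gt_at_top[of 0]
    proof eventually_elim
      case (elim n)
      define v where "v = li\<^sup>2 / real (N n i b) + lj\<^sup>2 / real (N n j0 b)"
      have vpos: "v > 0" unfolding v_def using elim lip ljp by (simp add: add_pos_pos)
      have up: "measure M (E n) \<le> exp (- d\<^sup>2 / (2 * v))"
        using Eup[of n] elim unfolding v_def d_def li_def lj_def by simp
      have "ln (measure M (E n)) \<le> - d\<^sup>2 / (2 * v)"
        using up Epos[of n] by (metis ln_exp ln_le_cancel_iff exp_gt_zero order_less_le_trans)
      then have "d\<^sup>2 / (2 * v) \<le> - ln (measure M (E n))" by linarith
      then have "(1 / real n) * (d\<^sup>2 / (2 * v)) \<le> (1 / real n) * (- ln (measure M (E n)))"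
        by (rule mult_left_mono) simp
      then have "(1 / real n) * (d\<^sup>2 / (2 * v)) \<le> - (1 / real n) * ln (measure M (E n))"
        by simp
      moreover have "(1 / real n) * (d\<^sup>2 / (2 * v)) = g n"
        unfolding g_def v_def using elim by (simp add: field_simps)
      ultimately show ?case by simp
    qed
    then have "liminf (\<lambda>n. ereal (g n)) \<le> liminf (\<lambda>n. ereal (- (1 / real n) * ln (measure M (E n))))"
      by (rule Liminf_mono)
    moreover have "liminf (\<lambda>n. ereal (g n)) = ereal (G_rate y lam alpha ib i b)"
      by (rule lim_imp_Liminf) (use glim in auto)
    ultimately show ?thesis by (simp add: E_def)
  qed
qed

end
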